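(* Let $X$ be a real or complex Banach space, $(A(n))_{n\in\mathbb{N}}$ a sequence in $\mathcal{B}(X)$, and $P:\mathbb{N}\to\mathcal{B}(X)$ a family of projections compatible with the system $x_{n+1}=A(n)x_n$, with complementary family $Q(n)=I-P(n)$. Then the system is $P$-exponentially dichotomic if and only if there exist constants $D\ge1$, $d>0$ and $c\ge0$ such that \[ \sum_{j=n}^{\infty}e^{d(j-n)}\|\mathcal{A}_P(j,p)x\|+\sum_{k=n}^{m}e^{d(m-k)}\|\mathcal{A}_Q(k,n)x\|\le D\big(e^{cn}\|\mathcal{A}_P(n,p)x\|+e^{cm}\|\mathcal{A}_Q(m,n)x\|\big) \] for all $(m,n,p)\in T$ and all $x\in X$.
   Context: $\mathbb{N}$ denotes the set of positive integers; $\mathcal{B}(X)$ is the Banach algebra of bounded linear operators on $X$, and $I$ is the identity operator. $\Delta=\{(m,n)\in\mathbb{N}^2: m\ge n\}$ and $T=\{(m,n,p)\in\mathbb{N}^3: m\ge n\ge p\}$. A family of projections is a map $P:\mathbb{N}\to\mathcal{B}(X)$ with $P(n)^2=P(n)$ for all $n$; its complementary family is $Q(n)=I-P(n)$. $P$ is compatible with the system $x_{n+1}=A(n)x_n$ if $A(n+1)P(n)=P(n+1)A(n+1)$ for all $n\in\mathbb{N}$. For $(m,n)\in\Delta$ define $\mathcal{A}_P(m,n)=A(m)\cdots A(n+1)P(n)$ if $m>n$ and $\mathcal{A}_P(n,n)=P(n)$; similarly $\mathcal{A}_Q(m,n)=A(m)\cdots A(n+1)Q(n)$ if $m>n$ and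 $\mathcal{A}_Q(n,n)=Q(n)$. The system is $P$-exponentially dichotomic if there exist constants $N\ge1$, $\alpha>0$ and $\beta\ge0$ such that $e^{\alpha(m-n)}\big(\|\mathcal{A}_P(m,n)x\|+\|Q(n)x\|\big)\le N\big(e^{\beta n}\|P(n)x\|+e^{\beta m}\|\mathcal{A}_Q(m,n)x\|\big)$ for all $(m,n)\in\Delta$, $x\in X$. *)

theory Defs
  imports "HOL-Analysis.Analysis"
begin

fun evol :: "(nat \<Rightarrow> 'a::real_normed_vector \<Rightarrow>\<^sub>L 'a) \<Rightarrow> nat \<Rightarrow> nat \<Rightarrow> 'a \<Rightarrow>\<^sub>L 'a" where
  "evol A n 0 = id_blinfun"
| "evol A n (Suc k) = A (n + Suc k) o\<^sub>L evol A n k"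

definition compl_fam :: "(nat \<Rightarrow> 'a::real_normed_vector \<Rightarrow>\<^sub>L 'a) \<Rightarrow> nat \<Rightarrow> 'a \<Rightarrow>\<^sub>L 'a" where
  "compl_fam P n = id_blinfun - P n"

text \<open>A_P(m,n) = A(m) ... A(n+1) P(n) for m > n, and P(n) for m = n (intended for m \<ge> n).\<close>
definition cocycleP :: "(nat \<Rightarrow> 'a::real_normed_vector \<Rightarrow>\<^sub>L 'a) \<Rightarrow> (nat \<Rightarrow> 'a \<Rightarrow>\<^sub>L 'a) \<Rightarrow> nat \<Rightarrow> nat \<Rightarrow> 'a \<Rightarrow>\<^sub>L 'a" where
  "cocycleP A P m n = evol A n (m - n) o\<^sub>L P n"

definition proj_family :: "(nat \<Rightarrow> 'a::real_normed_vector \<Rightarrow>\<^sub>L 'a) \<Rightarrow> bool" where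
  "proj_family P \<longleftrightarrow> (\<forall>n\<ge>1. P n o\<^sub>L P n = P n)"

definition compatible :: "(nat \<Rightarrow> 'a::real_normed_vector \<Rightarrow>\<^sub>L 'a) \<Rightarrow> (nat \<Rightarrow> 'a \<Rightarrow>\<^sub>L 'a) \<Rightarrow> bool" where
  "compatible A P \<longleftrightarrow> (\<forall>n\<ge>1. A (n + 1) o\<^sub>L P n = P (n + 1) o\<^sub>L A (n + 1))"

definition P_exp_dichotomic :: "(nat \<Rightarrow> 'a::real_normed_vector \<Rightarrow>\<^sub>L 'a) \<Rightarrow> (nat \<Rightarrow> 'a \<Rightarrow>\<^sub>L 'a) \<Rightarrow> bool" where
  "P_exp_dichotomic A P \<longleftrightarrow>
    (\<exists>N \<alpha> \<beta>::real. N \<ge> 1 \<and> \<alpha> > 0 \<and> \<beta> \<ge> 0 \<and>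
      (\<forall>m n x. 1 \<le> n \<and> n \<le> m \<longrightarrow>
         exp (\<alpha> * (real m - real n)) * (norm (cocycleP A P m n x) + norm (compl_fam P n x))
         \<le> N * (exp (\<beta> * real n) * norm (P n x) + exp (\<beta> * real m) * norm (cocycleP A (compl_fam P) m n x))))"

end

theory Submission
  imports Defs
begin

lemma evol_comp:
  "evol A n (j + k) x = evol A (n + j) k (evol A n j x)"
  by (induction k) (auto simp: add.assoc)

lemma evol_P:
  assumes "compatible A P" "n \<ge> 1"
  shows "evol A n k (P n x) = P (n + k) (evol A n k x)"
proof (induction k)
  case 0 then show ?case by simp
next
  case (Suc k)
  have c: "A (n + k + 1) (P (n + k) y) = P (n + k + 1) (A (n + k + 1) y)" for y
  proof -
    have "A (n + k + 1) o\<^sub>L P (n + k) = P (n + k + 1) o\<^sub>L A (n + k + 1)"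
      using assms unfolding compatible_def by auto
    then show ?thesis by (metis blinfun_apply_blinfun_compose)
  qed
  show ?case using Suc c[of "evol A n k x"] by simp
qed

lemma evol_Q:
  assumes "compatible A P" "n \<ge> 1"
  shows "evol A n k (compl_fam P n x) = compl_fam P (n + k) (evol A n k x)"
  using evol_P[OF assms, of k x]
  by (simp add: compl_fam_def blinfun.diff_right blinfun.diff_left)

lemma projI:
  assumes "proj_family P" "n \<ge> 1"
  shows "P n (P n x) = P n x"
proof -
  have "P n o\<^sub>L P n = P n" using assms unfolding proj_family_def by auto
  then show ?thesis by (metis blinfun_apply_blinfun_compose)
qed

lemma geo_bound:
  fixes r :: real
  assumes "0 \<le> r" "r < 1"
  shows "(\<Sum>k=n..m. r ^ (m - k)) \<le> 1 / (1 - r)"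
proof -
  have "(\<Sum>k=n..m. r ^ (m - k)) \<le> (\<Sum>k=0..m. r ^ (m - k))"
    by (rule sum_mono2) (auto simp: assms)
  also have "\<dots> = (\<Sum>i=0..m. r ^ (m - (m + 0 - i)))"
    by (rule sum.atLeastAtMost_rev)
  also have "\<dots> = (\<Sum>i<Suc m. r ^ i)"
    by (auto intro!: sum.cong simp: atLeast0AtMost lessThan_Suc_atMost)
  also have "\<dots> \<le> (\<Sum>i. r ^ i)"
    by (rule sum_le_suminf) (auto simp: assms summable_geometric)
  also have "\<dots> = 1 / (1 - r)" using suminf_geometric[of r] assms by simp
  finally show ?thesis .
qed

theorem mainTheorem4:
  fixes A P :: "nat \<Rightarrow> 'a::banach \<Rightarrow>\<^sub>L 'a"
  assumes "proj_family P"
    and "compatible A P"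
  shows "P_exp_dichotomic A P \<longleftrightarrow>
    (\<exists>D d c::real. D \<ge> 1 \<and> d > 0 \<and> c \<ge> 0 \<and>
      (\<forall>m n p x. 1 \<le> p \<and> p \<le> n \<and> n \<le> m \<longrightarrow>
         summable (\<lambda>i. exp (d * real i) * norm (cocycleP A P (n + i) p x)) \<and>
         (\<Sum>i. exp (d * real i) * norm (cocycleP A P (n + i) p x))
         + (\<Sum>k=n..m. exp (d * (real m - real k)) * norm (cocycleP A (compl_fam P) k n x))
         \<le> D * (exp (c * real n) * norm (cocycleP A P n p x)
                + exp (c * real m) * norm (cocycleP A (compl_fam P) m n x))))"
  (is "?L \<longleftrightarrow> ?R")
proof
  assume ?L
  then obtain N \<alpha> \<beta> :: real where N: "N \<ge> 1" and al: "\<alpha> > 0" and be: "\<beta> \<ge> 0"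
    and dich: "\<And>m n x. 1 \<le> n \<Longrightarrow> n \<le> m \<Longrightarrow>
         exp (\<alpha> * (real m - real n)) * (norm (cocycleP A P m n x) + norm (compl_fam P n x))
         \<le> N * (exp (\<beta> * real n) * norm (P n x) + exp (\<beta> * real m) * norm (cocycleP A (compl_fam P) m n x))"
    unfolding P_exp_dichotomic_def by blast
  define d where "d = \<alpha> / 2"
  define r where "r = exp (- d)"
  define K where "K = 1 / (1 - r)"
  have d: "d > 0" using al by (simp add: d_def)
  have r0: "0 < r" and r1: "r < 1" using d by (auto simp: r_def)
  have K1: "K \<ge> 1" using r0 r1 by (simp add: K_def field_simps)
  have expr: "exp (d * t) * exp (- \<alpha> * t) = exp (- d * t)" for t
    by (simp add: d_def flip: exp_add)
  have rpow: "exp (- (d * real i)) = r ^ i" for i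
    unfolding r_def exp_of_nat_mult[symmetric] by (simp add: algebra_simps)
  show ?R
  proof (rule exI[of _ "N * K"], rule exI[of _ d], rule exI[of _ \<beta>], intro conjI allI impI)
    show "1 \<le> N * K" using N K1 by (metis mult_mono' mult_1_left zero_le_one order_trans)
    show "0 < d" by (rule d)
    show "0 \<le> \<beta>" by (rule be)
    fix m n p :: nat and x :: 'a assume mnp: "1 \<le> p \<and> p \<le> n \<and> n \<le> m"
    hence p1: "1 \<le> p" and pn: "p \<le> n" and nm: "n \<le> m" by auto
    have n1: "1 \<le> n" using p1 pn by linarith
    define y where "y = cocycleP A P n p x"
    define W where "W = norm (cocycleP A (compl_fam P) m n x)"
    have Pny: "P n y = y"
      using evol_P[OF assms(2) p1, of "n - p" "P p x"] projI[OF assms(1) p1, of x] pn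
      by (simp add: y_def cocycleP_def)
    have term1: "norm (cocycleP A P (n + i) p x) \<le> N * exp (\<beta> * real n) * norm y * exp (- \<alpha> * real i)" for i
    proof -
      have eq: "cocycleP A P (n + i) p x = cocycleP A P (n + i) n y"
        using evol_comp[of A p "n - p" i "P p x"] pn Pny
        by (simp add: cocycleP_def y_def)
      have Q0: "compl_fam P n y = 0" using Pny by (simp add: compl_fam_def blinfun.diff_left)
      have Q0': "cocycleP A (compl_fam P) (n + i) n y = 0" using Q0 by (simp add: cocycleP_def)
      have "exp (\<alpha> * real i) * (norm (cocycleP A P (n + i) n y) + norm (compl_fam P n y))
           \<le> N * (exp (\<beta> * real n) * norm (P n y) + exp (\<beta> * real (n + i)) * norm (cocycleP A (compl_fam P) (n + i) n y))"
        using dich[OF n1, of "n + i" y] by simp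
      hence "exp (\<alpha> * real i) * norm (cocycleP A P (n + i) n y) \<le> N * exp (\<beta> * real n) * norm y"
        using Q0 Q0' Pny by simp
      hence "norm (cocycleP A P (n + i) n y) \<le> N * exp (\<beta> * real n) * norm y / exp (\<alpha> * real i)"
        by (simp add: field_simps)
      thus ?thesis using eq by (simp add: exp_minus field_simps)
    qed
    define C1 where "C1 = N * exp (\<beta> * real n) * norm y"
    have bnd1: "exp (d * real i) * norm (cocycleP A P (n + i) p x) \<le> C1 * r ^ i" for i
    proof -
      have "exp (d * real i) * norm (cocycleP A P (n + i) p x) \<le> exp (d * real i) * (C1 * exp (- \<alpha> * real i))"
        using term1[of i] by (intro mult_left_mono) (auto simp: C1_def)
      also have "\<dots> = C1 * exp (- d * real i)" using expr[of "real i"] by (simp add: algebra_simps)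
      finally show ?thesis by (simp add: rpow)
    qed
    have sg: "summable (\<lambda>i. C1 * r ^ i)" using r0 r1 by (intro summable_mult summable_geometric) simp
    show "summable (\<lambda>i. exp (d * real i) * norm (cocycleP A P (n + i) p x))"
      by (rule summable_comparison_test'[OF sg, of 0]) (use bnd1 in simp)
    hence S1: "(\<Sum>i. exp (d * real i) * norm (cocycleP A P (n + i) p x)) \<le> (\<Sum>i. C1 * r ^ i)"
      by (intro suminf_le bnd1 sg)
    have "(\<Sum>i. C1 * r ^ i) = C1 * K" using r0 r1 suminf_geometric[of r]
      by (simp add: suminf_mult K_def)
    with S1 have S1': "(\<Sum>i. exp (d * real i) * norm (cocycleP A P (n + i) p x)) \<le> C1 * K" by simp
    define C2 where "C2 = N * exp (\<beta> * real m) * W"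
    have bnd2: "exp (d * (real m - real k)) * norm (cocycleP A (compl_fam P) k n x) \<le> C2 * r ^ (m - k)"
      if k: "k \<in> {n..m}" for k
    proof -
      from k have nk: "n \<le> k" and km: "k \<le> m" by auto
      have k1: "1 \<le> k" using n1 nk by linarith
      define z where "z = cocycleP A (compl_fam P) k n x"
      have Qk: "compl_fam P k z = z"
      proof -
        have "compl_fam P n (compl_fam P n x) = compl_fam P n x"
          using projI[OF assms(1) n1, of x] by (simp add: compl_fam_def blinfun.diff_right blinfun.diff_left)
        thus ?thesis using evol_Q[OF assms(2) n1, of "k - n" "compl_fam P n x"] nk
          by (simp add: z_def cocycleP_def)
      qed
      have Pk: "P k z = 0"
      proof -
        have "P k z = P k (compl_fam P k z)" using Qk by simp
        also have "\<dots> = 0" using projI[OF assms(1) k1, of z] by (simp add: compl_fam_def blinfun.diff_right blinfun.diff_left)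
        finally show ?thesis .
      qed
      have eqm: "cocycleP A (compl_fam P) m k z = cocycleP A (compl_fam P) m n x"
        using evol_comp[of A n "k - n" "m - k" "compl_fam P n x"] nk km Qk
        by (simp add: cocycleP_def z_def)
      have "exp (\<alpha> * (real m - real k)) * (norm (cocycleP A P m k z) + norm (compl_fam P k z))
           \<le> N * (exp (\<beta> * real k) * norm (P k z) + exp (\<beta> * real m) * norm (cocycleP A (compl_fam P) m k z))"
        using dich[OF k1 km] by simp
      hence ineq: "exp (\<alpha> * (real m - real k)) * (norm (cocycleP A P m k z) + norm z) \<le> C2"
        using Qk Pk eqm by (simp add: C2_def W_def)
      have "exp (\<alpha> * (real m - real k)) * norm z \<le> exp (\<alpha> * (real m - real k)) * (norm (cocycleP A P m k z) + norm z)"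
        by (intro mult_left_mono) auto
      hence "exp (\<alpha> * (real m - real k)) * norm z \<le> C2" using ineq by linarith
      hence "norm z \<le> C2 / exp (\<alpha> * (real m - real k))"
        by (simp add: pos_le_divide_eq mult.commute)
      moreover have "C2 / exp (\<alpha> * (real m - real k)) = C2 * exp (- \<alpha> * (real m - real k))"
        using exp_minus[of "\<alpha> * (real m - real k)"] by (simp add: divide_inverse)
      ultimately have zb: "norm z \<le> C2 * exp (- \<alpha> * (real m - real k))" by simp
      have "exp (d * (real m - real k)) * norm z \<le> exp (d * (real m - real k)) * (C2 * exp (- \<alpha> * (real m - real k)))"
        using zb by (intro mult_left_mono) auto
      also have "\<dots> = C2 * exp (- d * (real m - real k))" using expr[of "real m - real k"] by (simp add: algebra_simps)
      also have "\<dots> = C2 * r ^ (m - k)" using rpow[of "m - k"] km by (simp add: of_nat_diff)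
      finally show ?thesis by (simp add: z_def)
    qed
    have S2: "(\<Sum>k=n..m. exp (d * (real m - real k)) * norm (cocycleP A (compl_fam P) k n x)) \<le> C2 * K"
    proof -
      have "(\<Sum>k=n..m. exp (d * (real m - real k)) * norm (cocycleP A (compl_fam P) k n x))
           \<le> (\<Sum>k=n..m. C2 * r ^ (m - k))" by (rule sum_mono) (rule bnd2)
      also have "\<dots> = C2 * (\<Sum>k=n..m. r ^ (m - k))" by (simp add: sum_distrib_left)
      also have "\<dots> \<le> C2 * K" unfolding K_def
        using geo_bound[of r m n] r0 r1 N by (intro mult_left_mono) (auto simp: C2_def W_def)
      finally show ?thesis .
    qed
    show "(\<Sum>i. exp (d * real i) * norm (cocycleP A P (n + i) p x))
         + (\<Sum>k=n..m. exp (d * (real m - real k)) * norm (cocycleP A (compl_fam P) k n x))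
         \<le> N * K * (exp (\<beta> * real n) * norm (cocycleP A P n p x)
                + exp (\<beta> * real m) * norm (cocycleP A (compl_fam P) m n x))"
      using S1' S2 by (simp add: C1_def C2_def W_def y_def algebra_simps)
  qed
next
  assume ?R
  then obtain D d c :: real where D: "D \<ge> 1" and d: "d > 0" and c: "c \<ge> 0"
    and H: "\<forall>m n p x. 1 \<le> p \<and> p \<le> n \<and> n \<le> m \<longrightarrow>
         summable (\<lambda>i. exp (d * real i) * norm (cocycleP A P (n + i) p x)) \<and>
         (\<Sum>i. exp (d * real i) * norm (cocycleP A P (n + i) p x))
         + (\<Sum>k=n..m. exp (d * (real m - real k)) * norm (cocycleP A (compl_fam P) k n x))
         \<le> D * (exp (c * real n) * norm (cocycleP A P n p x)
                + exp (c * real m) * norm (cocycleP A (compl_fam P) m n x))"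
    by blast
  show ?L unfolding P_exp_dichotomic_def
  proof (rule exI[of _ "2 * D"], rule exI[of _ d], rule exI[of _ c], intro conjI allI impI)
    show "1 \<le> 2 * D" using D by simp
    show "0 < d" by (rule d)
    show "0 \<le> c" by (rule c)
    fix m n :: nat and x :: 'a assume mn: "1 \<le> n \<and> n \<le> m"
    hence n1: "1 \<le> n" and nm: "n \<le> m" by auto
    define f where "f = (\<lambda>i. exp (d * real i) * norm (cocycleP A P (n + i) n x))"
    define S2 where "S2 = (\<Sum>k=n..m. exp (d * (real m - real k)) * norm (cocycleP A (compl_fam P) k n x))"
    define RHS where "RHS = D * (exp (c * real n) * norm (P n x)
                + exp (c * real m) * norm (cocycleP A (compl_fam P) m n x))"
    have Pnn: "cocycleP A P n n x = P n x" by (simp add: cocycleP_def)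
    from H[rule_format, of n n m x] n1 nm have sf: "summable f" and le: "suminf f + S2 \<le> RHS"
      by (simp_all add: f_def S2_def RHS_def Pnn)
    have f0: "f i \<ge> 0" for i by (simp add: f_def)
    have "sum f {m - n} \<le> suminf f" by (rule sum_le_suminf[OF sf]) (auto simp: f0)
    hence t1: "exp (d * (real m - real n)) * norm (cocycleP A P m n x) \<le> suminf f"
      using nm by (simp add: f_def of_nat_diff)
    have S20: "S2 \<ge> 0" unfolding S2_def by (intro sum_nonneg) simp
    have "exp (d * (real m - real k)) * norm (cocycleP A (compl_fam P) k n x) \<le> S2" if "k = n" for k
      unfolding S2_def using that nm
      by (intro member_le_sum) auto
    hence t2: "exp (d * (real m - real n)) * norm (compl_fam P n x) \<le> S2"
      by (simp add: cocycleP_def compl_fam_def blinfun.diff_right blinfun.diff_left)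
    have sf0: "suminf f \<ge> 0" using sf f0 by (simp add: suminf_nonneg)
    show "exp (d * (real m - real n)) * (norm (cocycleP A P m n x) + norm (compl_fam P n x))
         \<le> 2 * D * (exp (c * real n) * norm (P n x) + exp (c * real m) * norm (cocycleP A (compl_fam P) m n x))"
      using t1 t2 le S20 sf0 by (simp add: RHS_def algebra_simps)
  qed
qed

end
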